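(* Let $\sigma\subset N_{\mathbb{Q}}$ be a pointed rational polyhedral cone, $n=\dim N_{\mathbb{Q}}$, and let $P=Q+\sigma^{\vee}$ with $Q\subset M_{\mathbb{Q}}$ a polytope whose vertices lie in $M$. Then for every integer $e\ge n-1$ the polyhedron $eP$ is normal. In particular, every integrally closed homogeneous ideal of an affine toric surface $\mathbf{k}[\sigma^{\vee}\cap M]$ (with $n=2$) is normal.
   Context: $N$ lattice of rank $n$, $M$ its dual; $\sigma^{\vee}=\{m\in M_{\mathbb{Q}}: m(v)\ge0\ \forall v\in\sigma\}$. $eP$ is the dilation of $P$ by $e$. A polyhedron $P'=Q'+\sigma^{\vee}$ with $Q'$ a lattice polytope is normal if for every integer $e\ge1$, $(eP')\cap M=\{m_1+\cdots+m_e:\ m_i\in P'\cap M\}$. An ideal is normal if all its positive powers are integrally closed; homogeneous ideals of $\mathbf{k}[\sigma^{\vee}\cap M]$ are nonzero ideals generated by monomials $\chi^m$. *)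

theory Defs
  imports "HOL-Analysis.Analysis"
begin

text \<open>We identify N with Z^n and M with its dual Z^n (dual basis), so that
  N_Q = M_Q = Q^n, realised as the type rat ^ 'n with 'n finite, n = CARD('n).\<close>

definition pairing :: "rat ^ 'n \<Rightarrow> rat ^ 'n \<Rightarrow> rat" where
  "pairing m v = (\<Sum>i\<in>UNIV. m $ i * v $ i)"

definition lattice_pt :: "rat ^ 'n \<Rightarrow> bool" where
  "lattice_pt x \<longleftrightarrow> (\<forall>i. x $ i \<in> \<int>)"

definition cone_gen :: "(rat ^ 'n) set \<Rightarrow> (rat ^ 'n) set" where
  "cone_gen S = {x. \<exists>c. (\<forall>v\<in>S. c v \<ge> 0) \<and> x = (\<Sum>v\<in>S. c v *s v)}"

definition rational_polyhedral_cone :: "(rat ^ 'n) set \<Rightarrow> bool" where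
  "rational_polyhedral_cone \<sigma> \<longleftrightarrow> (\<exists>S. finite S \<and> \<sigma> = cone_gen S)"

definition pointed_cone :: "(rat ^ 'n) set \<Rightarrow> bool" where
  "pointed_cone \<sigma> \<longleftrightarrow> (\<forall>v. v \<in> \<sigma> \<and> - v \<in> \<sigma> \<longrightarrow> v = 0)"

definition dual_cone :: "(rat ^ 'n) set \<Rightarrow> (rat ^ 'n) set" where
  "dual_cone \<sigma> = {m. \<forall>v\<in>\<sigma>. pairing m v \<ge> 0}"

definition rat_conv :: "(rat ^ 'n) set \<Rightarrow> (rat ^ 'n) set" where
  "rat_conv V = {x. \<exists>c. (\<forall>v\<in>V. c v \<ge> 0) \<and> (\<Sum>v\<in>V. c v) = 1 \<and> x = (\<Sum>v\<in>V. c v *s v)}"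

definition minkowski_sum :: "(rat ^ 'n) set \<Rightarrow> (rat ^ 'n) set \<Rightarrow> (rat ^ 'n) set" where
  "minkowski_sum A B = {a + b | a b. a \<in> A \<and> b \<in> B}"

definition dilate :: "nat \<Rightarrow> (rat ^ 'n) set \<Rightarrow> (rat ^ 'n) set" where
  "dilate e P = (\<lambda>p. of_nat e *s p) ` P"

definition normal_polyhedron :: "(rat ^ 'n) set \<Rightarrow> bool" where
  "normal_polyhedron P \<longleftrightarrow>
     (\<forall>e::nat. e \<ge> 1 \<longrightarrow>
        {x \<in> dilate e P. lattice_pt x} =
        {x. \<exists>m. (\<forall>i<e. m i \<in> P \<and> lattice_pt (m i)) \<and> x = (\<Sum>i<e. m i)})"

end

theory Submission
  imports Defs
begin

definition cc :: "(rat ^ 'n) set \<Rightarrow> rat \<Rightarrow> rat ^ 'n \<Rightarrow> bool" where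
  "cc U h x \<longleftrightarrow> (\<exists>c. (\<forall>v\<in>U. c v \<ge> 0) \<and> (\<Sum>v\<in>U. c v) = h \<and> x = (\<Sum>v\<in>U. c v *s v))"

lemma rat_conv_cc: "rat_conv U = {x. cc U 1 x}"
  unfolding rat_conv_def cc_def by blast

lemma cc_scale:
  assumes "cc U h x" "r \<ge> 0" shows "cc U (r * h) (r *s x)"
proof -
  obtain c where c: "\<forall>v\<in>U. c v \<ge> 0" "(\<Sum>v\<in>U. c v) = h" "x = (\<Sum>v\<in>U. c v *s v)"
    using assms unfolding cc_def by blast
  show ?thesis unfolding cc_def
    apply (rule exI[of _ "\<lambda>v. r * c v"])
    using c assms(2) by (auto simp: sum_distrib_left vec.scale_sum_right)
qed

lemma cc_add:
  assumes "cc U a x" "cc U b y" shows "cc U (a + b) (x + y)"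
proof -
  obtain c where c: "\<forall>v\<in>U. c v \<ge> 0" "(\<Sum>v\<in>U. c v) = a" "x = (\<Sum>v\<in>U. c v *s v)"
    using assms unfolding cc_def by blast
  obtain d where d: "\<forall>v\<in>U. d v \<ge> 0" "(\<Sum>v\<in>U. d v) = b" "y = (\<Sum>v\<in>U. d v *s v)"
    using assms unfolding cc_def by blast
  show ?thesis unfolding cc_def
    apply (rule exI[of _ "\<lambda>v. c v + d v"])
    using c d by (auto simp: sum.distrib vec.scale_left_distrib)
qed

lemma cc_zero: "cc U 0 0"
  unfolding cc_def by (rule exI[of _ "\<lambda>v. 0"]) auto

lemma cc_zeroD: "cc U 0 x \<Longrightarrow> finite U \<Longrightarrow> x = 0"
  unfolding cc_def
  by (metis (no_types, lifting) sum_nonneg_eq_0_iff vec.scale_zero_left sum.neutral)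

lemma cc_point: "finite U \<Longrightarrow> u \<in> U \<Longrightarrow> cc U 1 u"
  unfolding cc_def
  apply (rule exI[of _ "\<lambda>v. if v = u then 1 else 0"])
proof (intro conjI)
  assume "finite U" "u \<in> U"
  then show "u = (\<Sum>v\<in>U. (if v = u then 1 else 0) *s v)"
  proof -
    have "(\<Sum>v\<in>U. (if v = u then 1 else 0) *s v) = (\<Sum>v\<in>U. if v = u then v else 0)"
      by (rule sum.cong) auto
    then show ?thesis using \<open>finite U\<close> \<open>u \<in> U\<close> by simp
  qed
qed (auto simp: sum.delta)

lemma cc_sum:
  assumes "finite I" "\<And>i. i \<in> I \<Longrightarrow> cc U (h i) (x i)"
  shows "cc U (\<Sum>i\<in>I. h i) (\<Sum>i\<in>I. x i)"
  using assms by (induction I rule: finite_induct) (auto intro: cc_add cc_zero)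

lemma cc_trans:
  assumes "finite W" "\<And>w. w \<in> W \<Longrightarrow> cc U 1 w" "cc W h x"
  shows "cc U h x"
proof -
  obtain c where c: "\<forall>v\<in>W. c v \<ge> 0" "(\<Sum>v\<in>W. c v) = h" "x = (\<Sum>v\<in>W. c v *s v)"
    using assms unfolding cc_def by blast
  have "cc U (\<Sum>w\<in>W. c w * 1) (\<Sum>w\<in>W. c w *s w)"
    using assms(1) by (rule cc_sum) (use c assms(2) cc_scale[of U 1 _ "c _"] in auto)
  then show ?thesis using c by simp
qed

lemma cc_mono:
  assumes "U \<subseteq> W" "finite W" "cc U h x" shows "cc W h x"
proof -
  obtain c where c: "\<forall>v\<in>U. c v \<ge> 0" "(\<Sum>v\<in>U. c v) = h" "x = (\<Sum>v\<in>U. c v *s v)"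
    using assms unfolding cc_def by blast
  have fU: "finite U" using assms finite_subset by blast
  let ?d = "\<lambda>v. if v \<in> U then c v else 0"
  have "(\<Sum>v\<in>W. ?d v) = (\<Sum>v\<in>U. c v)"
    using sum.mono_neutral_cong_right[OF assms(2) assms(1)] by (simp add: if_distrib) (smt (verit) assms(1) assms(2) sum.inter_restrict Int_absorb1 sum.cong)
  moreover have "(\<Sum>v\<in>W. ?d v *s v) = (\<Sum>v\<in>U. c v *s v)"
  proof -
    have "(\<Sum>v\<in>W. ?d v *s v) = (\<Sum>v\<in>W. if v \<in> U then c v *s v else 0)"
      by (rule sum.cong) auto
    also have "\<dots> = (\<Sum>v\<in>U. c v *s v)"
      using assms(1,2) by (simp add: sum.inter_restrict[symmetric] Int_absorb1)
    finally show ?thesis .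
  qed
  ultimately show ?thesis unfolding cc_def using c
    by (intro exI[of _ ?d]) auto
qed

definition indep :: "(rat ^ 'n) set \<Rightarrow> rat \<Rightarrow> rat ^ 'n \<Rightarrow> bool" where
  "indep U \<rho> c0 \<longleftrightarrow> \<not>(\<exists>a b. (\<Sum>u\<in>U. a u) = 0 \<and> (\<Sum>u\<in>U. a u *s u) + b *s c0 = 0 \<and>
      (\<rho> = 0 \<longrightarrow> b = 0) \<and> ((\<exists>u\<in>U. a u \<noteq> 0) \<or> b \<noteq> 0))"

lemma carath_step:
  fixes U :: "(rat^'n) set"
  assumes "finite U" "\<forall>u\<in>U. l u \<ge> 0" "\<rho> \<ge> 0" "x = (\<Sum>u\<in>U. l u *s u) + \<rho> *s c0"
  shows "\<exists>U' l' r. U' \<subseteq> U \<and> (\<forall>u\<in>U'. l' u > 0) \<and> r \<ge> 0 \<and> (\<Sum>u\<in>U'. l' u) = (\<Sum>u\<in>U. l u)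
     \<and> x = (\<Sum>u\<in>U'. l' u *s u) + r *s c0 \<and> indep U' r c0"
  using assms
proof (induct "card U + (if \<rho> = 0 then 0 else 1)" arbitrary: U l \<rho> rule: less_induct)
  case less
  note IH = less(1)
  have fin: "finite U" and lnn: "\<forall>u\<in>U. l u \<ge> 0" and rnn: "\<rho> \<ge> 0"
    and xeq: "x = (\<Sum>u\<in>U. l u *s u) + \<rho> *s c0" using less by auto
  have remove: "\<exists>U' l' r. U' \<subseteq> U \<and> (\<forall>u\<in>U'. l' u > 0) \<and> r \<ge> 0 \<and> (\<Sum>u\<in>U'. l' u) = (\<Sum>u\<in>U. l u)
     \<and> x = (\<Sum>u\<in>U'. l' u *s u) + r *s c0 \<and> indep U' r c0"
    if w: "w \<in> U" and lz: "m w = 0" and mnn: "\<forall>u\<in>U. m u \<ge> 0" and snn: "s \<ge> 0"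
      and sr: "\<rho> = 0 \<longrightarrow> s = 0"
      and msum: "(\<Sum>u\<in>U. m u) = (\<Sum>u\<in>U. l u)" and xm: "x = (\<Sum>u\<in>U. m u *s u) + s *s c0"
    for w m s
  proof -
    have lt: "card (U - {w}) + (if s = 0 then 0 else 1) < card U + (if \<rho> = 0 then 0 else 1)"
    proof -
      have "card U > 0" using w fin card_gt_0_iff by blast
      then show ?thesis using w fin sr by (auto simp: card_Diff_singleton)
    qed
    have s1: "(\<Sum>u\<in>U - {w}. m u) = (\<Sum>u\<in>U. m u)"
      using fin w lz by (simp add: sum.remove)
    have s2: "(\<Sum>u\<in>U - {w}. m u *s u) = (\<Sum>u\<in>U. m u *s u)"
      using fin w lz by (simp add: sum.remove)
    have fin': "finite (U - {w})" using fin by simp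
    have mnn': "\<forall>u\<in>U - {w}. m u \<ge> 0" using mnn by simp
    have xm': "x = (\<Sum>u\<in>U - {w}. m u *s u) + s *s c0" using xm s2 by simp
    from IH[where U="U - {w}" and l=m and \<rho>=s, OF lt fin' mnn' snn xm']
    obtain U' l' r where h: "U' \<subseteq> U - {w}" "(\<forall>u\<in>U'. l' u > 0)" "r \<ge> 0" "(\<Sum>u\<in>U'. l' u) = (\<Sum>u\<in>U - {w}. m u)"
     "x = (\<Sum>u\<in>U'. l' u *s u) + r *s c0" "indep U' r c0" by blast
    have "U' \<subseteq> U" using h(1) by blast
    moreover have "(\<Sum>u\<in>U'. l' u) = (\<Sum>u\<in>U. l u)" using h(4) s1 msum by simp
    ultimately show ?thesis using h(2,3,5,6) by blast
  qed
  show ?case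
  proof (cases "\<exists>w\<in>U. l w = 0")
    case True
    then obtain w where "w \<in> U" "l w = 0" by blast
    then show ?thesis using remove[of w l \<rho>] lnn rnn xeq by auto
  next
    case False
    then have lpos: "\<forall>u\<in>U. l u > 0" using lnn by (metis order_le_less)
    show ?thesis
    proof (cases "indep U \<rho> c0")
      case True
      then show ?thesis using lpos rnn xeq by blast
    next
      case False
      then obtain a b where ab: "(\<Sum>u\<in>U. a u) = 0" "(\<Sum>u\<in>U. a u *s u) + b *s c0 = 0"
        "\<rho> = 0 \<longrightarrow> b = 0" "(\<exists>u\<in>U. a u \<noteq> 0) \<or> b \<noteq> 0"
        unfolding indep_def by blast
      show ?thesis
      proof (cases "\<forall>u\<in>U. a u = 0")
        case True
        then have "(\<Sum>u\<in>U. a u *s u) = 0" by simp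
        with ab True have "b \<noteq> 0" "\<rho> \<noteq> 0" "c0 = 0" by auto
        have lt: "card U + (if (0::rat) = 0 then 0 else 1) < card U + (if \<rho> = 0 then 0 else 1)"
          using \<open>\<rho> \<noteq> 0\<close> by simp
        have xe: "x = (\<Sum>u\<in>U. l u *s u) + 0 *s c0" using xeq \<open>c0 = 0\<close> by simp
        from IH[where U=U and l=l and \<rho>=0, OF lt fin lnn _ xe] show ?thesis by simp
      next
        case False
        have "\<exists>u\<in>U. a u > 0"
        proof (rule ccontr)
          assume "\<not> ?thesis"
          then have "\<forall>u\<in>U. - a u \<ge> 0" by auto
          moreover have "(\<Sum>u\<in>U. - a u) = 0" using ab by (simp add: sum_negf)
          ultimately have "\<forall>u\<in>U. - a u = 0" using sum_nonneg_eq_0_iff[OF fin, of "\<lambda>u. - a u"] by simp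
          then show False using False by auto
        qed
        define S where "S = (\<lambda>u. l u / a u) ` {u\<in>U. a u > 0} \<union> (if b > 0 then {\<rho> / b} else {})"
        have Sfin: "finite S" unfolding S_def using fin by auto
        have Sne: "S \<noteq> {}" unfolding S_def using \<open>\<exists>u\<in>U. a u > 0\<close> by auto
        define t where "t = Min S"
        have tS: "t \<in> S" unfolding t_def using Sfin Sne by (rule Min_in)
        have tle: "\<And>s. s \<in> S \<Longrightarrow> t \<le> s" unfolding t_def using Sfin by (rule Min_le)
        have tpos: "t > 0"
        proof (cases "t \<in> (\<lambda>u. l u / a u) ` {u\<in>U. a u > 0}")
          case True
          then show ?thesis using lpos by auto
        next
          case False
          then have "b > 0" "t = \<rho> / b" using tS unfolding S_def by (auto split: if_splits)
          then show ?thesis using ab(3) rnn by auto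
        qed
        define m where "m u = l u - t * a u" for u
        define s where "s = \<rho> - t * b"
        have mnn: "\<forall>u\<in>U. m u \<ge> 0"
        proof
          fix u assume u: "u \<in> U"
          show "m u \<ge> 0"
          proof (cases "a u > 0")
            case True
            then have "t \<le> l u / a u" using tle u unfolding S_def by auto
            then have "t * a u \<le> l u" using True by (simp add: pos_le_divide_eq)
            then show ?thesis unfolding m_def by simp
          next
            case False
            then have "t * a u \<le> 0" using tpos by (simp add: mult_nonneg_nonpos)
            moreover have "l u > 0" using lpos u by blast
            ultimately show ?thesis unfolding m_def by linarith
          qed
        qed
        have snn: "s \<ge> 0"
        proof (cases "b > 0")
          case True
          then have "t \<le> \<rho> / b" using tle unfolding S_def by auto
          then have "t * b \<le> \<rho>" using True by (simp add: pos_le_divide_eq)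
          then show ?thesis unfolding s_def by simp
        next
          case False
          then have "t * b \<le> 0" using tpos by (simp add: mult_nonneg_nonpos)
          then show ?thesis unfolding s_def using rnn by simp
        qed
        have sr: "\<rho> = 0 \<longrightarrow> s = 0" using ab(3) unfolding s_def by simp
        have msum: "(\<Sum>u\<in>U. m u) = (\<Sum>u\<in>U. l u)"
          unfolding m_def using ab(1) by (simp add: sum_subtractf sum_distrib_left[symmetric])
        have xm: "x = (\<Sum>u\<in>U. m u *s u) + s *s c0"
        proof -
          have e1: "(\<Sum>u\<in>U. m u *s u) = (\<Sum>u\<in>U. l u *s u) - t *s (\<Sum>u\<in>U. a u *s u)"
            unfolding m_def vec.scale_sum_right vec.scale_scale sum_subtractf[symmetric]
            by (rule sum.cong) (auto simp: vec.scale_left_diff_distrib)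
          have e2: "s *s c0 = \<rho> *s c0 - t *s (b *s c0)"
            unfolding s_def by (simp add: vec.scale_left_diff_distrib)
          have "(\<Sum>u\<in>U. m u *s u) + s *s c0 =
              ((\<Sum>u\<in>U. l u *s u) + \<rho> *s c0) - t *s ((\<Sum>u\<in>U. a u *s u) + b *s c0)"
            unfolding e1 e2 vec.scale_right_distrib by simp
          then show ?thesis using ab(2) xeq by simp
        qed
        show ?thesis
        proof (cases "t \<in> (\<lambda>u. l u / a u) ` {u\<in>U. a u > 0}")
          case True
          then obtain w where w: "w \<in> U" "a w > 0" "t = l w / a w" by auto
          then have "m w = 0" unfolding m_def by simp
          then show ?thesis using remove[OF w(1) _ mnn snn sr msum xm] by blast
        next
          case False
          then have "b > 0" "t = \<rho> / b" using tS unfolding S_def by (auto split: if_splits)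
          then have s0: "s = 0" unfolding s_def by simp
          have lt: "card U + (if s = 0 then 0 else 1) < card U + (if \<rho> = 0 then 0 else 1)"
            using s0 ab(3) \<open>b > 0\<close> by auto
          from IH[where U=U and l=m and \<rho>=s, OF lt fin mnn snn xm] obtain U' l' r where
            "U' \<subseteq> U" "(\<forall>u\<in>U'. l' u > 0)" "r \<ge> 0" "(\<Sum>u\<in>U'. l' u) = (\<Sum>u\<in>U. m u)"
            "x = (\<Sum>u\<in>U'. l' u *s u) + r *s c0" "indep U' r c0" by blast
          then show ?thesis using msum by (intro exI[of _ U'] exI[of _ l'] exI[of _ r]) simp
        qed
      qed
    qed
  qed
qed

lemma dependent_big:
  fixes D :: "(rat^'n) set"
  assumes "finite D" "card D > CARD('n)"
  shows "vec.dependent D"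
proof (rule vec.dependent_biggerset_general)
  have "vec.dim D \<le> vec.dim (UNIV :: (rat^'n) set)" by (rule vec.dim_subset) simp
  moreover have "vec.dim (UNIV :: (rat^'n) set) = CARD('n)" by (rule vec_dim_card)
  ultimately show "card D > vec.dim D" using assms(2) by linarith
qed

lemma indep_card:
  fixes U :: "(rat^'n) set"
  assumes fin: "finite U" and ind: "indep U \<rho> c0"
  shows "card U + (if \<rho> = 0 then 0 else 1) \<le> CARD('n) + 1"
proof (rule ccontr)
  assume big: "\<not> ?thesis"
  have "U \<noteq> {}" using big by (auto split: if_splits)
  then obtain u0 where u0: "u0 \<in> U" by blast
  define f where "f v = v - u0" for v :: "rat^'n"
  have injf: "inj_on f (U - {u0})" unfolding f_def inj_on_def by simp
  define D0 where "D0 = f ` (U - {u0})"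
  have cD0: "card D0 = card U - 1" unfolding D0_def using card_image[OF injf] fin u0
    by (simp add: card_Diff_singleton)
  have cU: "card U > 0" using fin u0 card_gt_0_iff by blast
  show False
  proof (cases "\<rho> \<noteq> 0 \<and> c0 \<in> D0")
    case True
    then obtain u1 where u1: "u1 \<in> U" "u1 \<noteq> u0" "c0 = u1 - u0" unfolding D0_def f_def by auto
    define a where "a u = (if u = u1 then 1 else if u = u0 then -1 else (0::rat))" for u
    have "(\<Sum>u\<in>U. a u) = (\<Sum>u\<in>U. (if u = u1 then 1 else 0) + (if u = u0 then -1 else 0))"
      unfolding a_def by (rule sum.cong) (use u1 in auto)
    also have "\<dots> = 0" using fin u0 u1 by (simp add: sum.distrib sum.delta)
    finally have s1: "(\<Sum>u\<in>U. a u) = 0" .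
    have "(\<Sum>u\<in>U. a u *s u) = (\<Sum>u\<in>U. (if u = u1 then u else 0) + (if u = u0 then - u else 0))"
      unfolding a_def by (rule sum.cong) (use u1 in auto)
    also have "\<dots> = u1 - u0" using fin u0 u1 by (simp add: sum.distrib sum.delta)
    finally have s2: "(\<Sum>u\<in>U. a u *s u) + (-1) *s c0 = 0" using u1 by simp
    have "a u1 \<noteq> 0" unfolding a_def by simp
    then show False using ind s1 s2 True u1 unfolding indep_def by blast
  next
    case False
    define D where "D = D0 \<union> (if \<rho> = 0 then {} else {c0})"
    have finD: "finite D" unfolding D_def D0_def using fin by auto
    have "card D = card D0 + (if \<rho> = 0 then 0 else 1)"
      unfolding D_def using False finD D0_def fin by (auto simp: card_insert_if)
    then have "card D > CARD('n)" using big cD0 cU by (auto split: if_splits)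
    then have "vec.dependent D" using dependent_big finD by blast
    then obtain k where k: "\<exists>d\<in>D. k d \<noteq> 0" "(\<Sum>d\<in>D. k d *s d) = 0"
      using vec.dependent_finite[OF finD] by blast
    define a where "a u = (if u = u0 then - (\<Sum>v\<in>U - {u0}. k (f v)) else k (f u))" for u
    define b where "b = (if \<rho> = 0 then 0 else k c0)"
    have s1: "(\<Sum>u\<in>U. a u) = 0"
    proof -
      have "(\<Sum>u\<in>U. a u) = a u0 + (\<Sum>u\<in>U - {u0}. a u)" using fin u0 by (simp add: sum.remove)
      also have "(\<Sum>u\<in>U - {u0}. a u) = (\<Sum>u\<in>U - {u0}. k (f u))"
        unfolding a_def by (rule sum.cong) auto
      finally show ?thesis unfolding a_def by simp
    qed
    have sD0: "(\<Sum>u\<in>U. a u *s u) = (\<Sum>d\<in>D0. k d *s d)"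
    proof -
      have "(\<Sum>u\<in>U. a u *s u) = a u0 *s u0 + (\<Sum>u\<in>U - {u0}. a u *s u)" using fin u0 by (simp add: sum.remove)
      also have "(\<Sum>u\<in>U - {u0}. a u *s u) = (\<Sum>u\<in>U - {u0}. k (f u) *s u)"
        unfolding a_def by (rule sum.cong) auto
      also have "a u0 *s u0 = (\<Sum>u\<in>U - {u0}. - (k (f u) *s u0))"
        unfolding a_def by (simp add: vec.scale_sum_left sum_negf)
      finally have "(\<Sum>u\<in>U. a u *s u) = (\<Sum>u\<in>U - {u0}. k (f u) *s (u - u0))"
        by (simp add: sum.distrib[symmetric] vec.scale_right_diff_distrib)
      also have "\<dots> = (\<Sum>u\<in>U - {u0}. k (f u) *s f u)" unfolding f_def ..
      also have "\<dots> = (\<Sum>d\<in>D0. k d *s d)" unfolding D0_def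
        using sum.reindex[OF injf, of "\<lambda>d. k d *s d"] by simp
      finally show ?thesis .
    qed
    have s2: "(\<Sum>u\<in>U. a u *s u) + b *s c0 = 0"
    proof (cases "\<rho> = 0")
      case True
      then have "D = D0" unfolding D_def by simp
      then show ?thesis using k sD0 True unfolding b_def by simp
    next
      case r: False
      then have "c0 \<notin> D0" using False by blast
      then have "(\<Sum>d\<in>D. k d *s d) = k c0 *s c0 + (\<Sum>d\<in>D0. k d *s d)"
        unfolding D_def using r fin D0_def by simp
      then show ?thesis using k sD0 r unfolding b_def by (simp add: add.commute)
    qed
    have nt: "(\<exists>u\<in>U. a u \<noteq> 0) \<or> b \<noteq> 0"
    proof -
      obtain d where d: "d \<in> D" "k d \<noteq> 0" using k by blast
      show ?thesis
      proof (cases "d \<in> D0")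
        case True
        then obtain v where "v \<in> U - {u0}" "d = f v" unfolding D0_def by blast
        then have "a v \<noteq> 0" "v \<in> U" unfolding a_def using d by auto
        then show ?thesis by blast
      next
        case False
        then have "\<rho> \<noteq> 0" "d = c0" using d unfolding D_def by (auto split: if_splits)
        then show ?thesis unfolding b_def using d by simp
      qed
    qed
    have "\<rho> = 0 \<longrightarrow> b = 0" unfolding b_def by simp
    then show False using ind s1 s2 nt unfolding indep_def by blast
  qed
qed

lemma lattice_add: "lattice_pt a \<Longrightarrow> lattice_pt b \<Longrightarrow> lattice_pt (a + b)"
  unfolding lattice_pt_def by auto
lemma lattice_diff: "lattice_pt a \<Longrightarrow> lattice_pt b \<Longrightarrow> lattice_pt (a - b)"
  unfolding lattice_pt_def by auto
lemma lattice_zero: "lattice_pt 0"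
  unfolding lattice_pt_def by auto
lemma lattice_sum: "finite I \<Longrightarrow> (\<And>i. i \<in> I \<Longrightarrow> lattice_pt (f i)) \<Longrightarrow> lattice_pt (\<Sum>i\<in>I. f i)"
  by (induction I rule: finite_induct) (auto intro: lattice_add lattice_zero)

lemma peel_one:
  fixes U :: "(rat^'n) set"
  assumes "finite U" "u \<in> U" "l u \<ge> 1" "\<forall>v\<in>U. l v \<ge> 0" "(\<Sum>v\<in>U. l v) = h"
  shows "cc U (h - 1) ((\<Sum>v\<in>U. l v *s v) - u)"
proof -
  define m where "m v = l v - (if v = u then 1 else 0)" for v
  have "(\<Sum>v\<in>U. m v) = h - 1" unfolding m_def using assms
    by (simp add: sum_subtractf sum.delta)
  moreover have "(\<Sum>v\<in>U. m v *s v) = (\<Sum>v\<in>U. l v *s v) - u"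
  proof -
    have "(\<Sum>v\<in>U. m v *s v) = (\<Sum>v\<in>U. l v *s v - (if v = u then u else 0))"
      unfolding m_def by (rule sum.cong) (auto simp: vec.scale_left_diff_distrib)
    then show ?thesis using assms by (simp add: sum_subtractf sum.delta)
  qed
  moreover have "\<forall>v\<in>U. m v \<ge> 0" unfolding m_def using assms by auto
  ultimately show ?thesis unfolding cc_def by (intro exI[of _ m]) simp
qed

lemma sum_lt_card:
  fixes l :: "'a \<Rightarrow> rat"
  assumes "finite U" "U \<noteq> {}" "\<forall>u\<in>U. l u < 1"
  shows "(\<Sum>u\<in>U. l u) < of_nat (card U)"
proof -
  have "(\<Sum>u\<in>U. l u) < (\<Sum>u\<in>U. 1)" using assms by (intro sum_strict_mono) auto
  then show ?thesis by simp
qed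

lemma indep0:
  assumes "indep U r c0" "(\<Sum>u\<in>U. a u) = 0" "(\<Sum>u\<in>U. a u *s u) = 0"
  shows "\<forall>u\<in>U. a u = 0"
proof (rule ccontr)
  assume "\<not> (\<forall>u\<in>U. a u = 0)"
  then have "(\<Sum>u\<in>U. a u) = 0 \<and> (\<Sum>u\<in>U. a u *s u) + 0 *s c0 = 0 \<and> (r = 0 \<longrightarrow> (0::rat) = 0) \<and> ((\<exists>u\<in>U. a u \<noteq> 0) \<or> (0::rat) \<noteq> 0)"
    using assms(2,3) by simp
  then show False using assms(1) unfolding indep_def by blast
qed

lemma stellar:
  fixes T :: "(rat^'n) set" and h :: nat
  assumes finT: "finite T" and HT: "\<forall>U z. U \<subseteq> T \<longrightarrow> cc U 1 z \<longrightarrow> lattice_pt z \<longrightarrow> z \<in> T"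
    and latT: "\<forall>t\<in>T. lattice_pt t"
    and lat: "lattice_pt x" and hn: "CARD('n) \<le> h"
  shows "U \<subseteq> T \<Longrightarrow> cc U (of_nat h) x \<Longrightarrow> \<exists>p\<in>T. cc T (of_nat h - 1) (x - p)"
proof (induct "card {s\<in>T. cc U 1 s}" arbitrary: U rule: less_induct)
  case less
  note IH = less(1)
  have UT: "U \<subseteq> T" and ccU: "cc U (of_nat h) x" using less by auto
  have finU: "finite U" using UT finT finite_subset by blast
  obtain l0 where l0: "\<forall>v\<in>U. l0 v \<ge> 0" "(\<Sum>v\<in>U. l0 v) = of_nat h" "x = (\<Sum>v\<in>U. l0 v *s v)"
    using ccU unfolding cc_def by blast
  have "x = (\<Sum>v\<in>U. l0 v *s v) + 0 *s 0" using l0 by simp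
  from carath_step[OF finU l0(1) _ this]
  obtain U' l r where U': "U' \<subseteq> U" "\<forall>u\<in>U'. l u > 0" "r \<ge> 0" "(\<Sum>u\<in>U'. l u) = of_nat h"
    "x = (\<Sum>u\<in>U'. l u *s u) + r *s 0" "indep U' r 0" using l0(2) by auto
  have finU': "finite U'" using U'(1) finU finite_subset by blast
  have U'T: "U' \<subseteq> T" using U'(1) UT by blast
  have xU': "x = (\<Sum>u\<in>U'. l u *s u)" using U'(5) by simp
  have ind: "\<And>a. (\<Sum>u\<in>U'. a u) = 0 \<Longrightarrow> (\<Sum>u\<in>U'. a u *s u) = 0 \<Longrightarrow> \<forall>u\<in>U'. a u = 0"
    using indep0[OF U'(6)] by blast
  have cardU': "card U' + (if r = 0 then 0 else 1) \<le> CARD('n) + 1"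
    using indep_card[OF finU' U'(6)] .
  show ?case
  proof (cases "\<exists>u\<in>U'. l u \<ge> 1")
    case True
    then obtain u where u: "u \<in> U'" "l u \<ge> 1" by blast
    have "cc U' (of_nat h - 1) (x - u)"
      using peel_one[OF finU' u _ U'(4)] U'(2) xU' by (auto simp: less_imp_le)
    then have "cc T (of_nat h - 1) (x - u)" using cc_mono[OF U'T finT] by blast
    then show ?thesis using u U'T by blast
  next
    case False
    then have lt1: "\<forall>u\<in>U'. l u < 1" by auto
    have n1: "CARD('n) \<ge> 1" by (simp add: Suc_leI)
    have U'ne: "U' \<noteq> {}"
    proof
      assume "U' = {}"
      then have "(of_nat h :: rat) = 0" using U'(4) by simp
      then show False using hn n1 by simp
    qed
    have "(of_nat h :: rat) < of_nat (card U')" using sum_lt_card[OF finU' U'ne lt1] U'(4) by simp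
    then have "h < card U'" by simp
    then have cU': "card U' = h + 1" using cardU' hn by (auto split: if_splits)
    define \<mu> where "\<mu> u = 1 - l u" for u
    have \<mu>pos: "\<forall>u\<in>U'. \<mu> u > 0" "\<forall>u\<in>U'. \<mu> u < 1" unfolding \<mu>_def using lt1 U'(2) by auto
    have s\<mu>: "(\<Sum>u\<in>U'. \<mu> u) = 1" unfolding \<mu>_def using U'(4) cU'
      by (simp add: sum_subtractf)
    define z where "z = (\<Sum>u\<in>U'. \<mu> u *s u)"
    have zdiff: "z = (\<Sum>u\<in>U'. u) - x"
      unfolding z_def \<mu>_def xU' by (simp add: vec.scale_left_diff_distrib sum_subtractf)
    have "lattice_pt (\<Sum>u\<in>U'. u)" by (rule lattice_sum[OF finU']) (use U'T latT in blast)
    then have latz: "lattice_pt z" unfolding zdiff using lat by (rule lattice_diff)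
    have ccz: "cc U' 1 z" unfolding cc_def z_def using \<mu>pos s\<mu> by (intro exI[of _ \<mu>]) auto
    have zT: "z \<in> T" using HT U'T ccz latz by blast
    have znot: "z \<notin> U'"
    proof
      assume zU: "z \<in> U'"
      define a where "a u = \<mu> u - (if u = z then 1 else 0)" for u
      have "(\<Sum>u\<in>U'. a u) = 0" unfolding a_def using s\<mu> zU finU' by (simp add: sum_subtractf)
      moreover have "(\<Sum>u\<in>U'. a u *s u) = 0"
      proof -
        have "(\<Sum>u\<in>U'. a u *s u) = (\<Sum>u\<in>U'. \<mu> u *s u - (if u = z then u else 0))"
          unfolding a_def by (rule sum.cong) (auto simp: vec.scale_left_diff_distrib)
        then show ?thesis using zU finU' by (simp add: sum_subtractf z_def[symmetric])
      qed
      ultimately have "a z = 0" using ind zU by blast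
      then show False unfolding a_def using \<mu>pos zU by auto
    qed
    define t where "t = Min ((\<lambda>u. l u / \<mu> u) ` U')"
    have "t \<in> (\<lambda>u. l u / \<mu> u) ` U'" unfolding t_def using finU' U'ne by (intro Min_in) auto
    then obtain j where j: "j \<in> U'" "t = l j / \<mu> j" by blast
    have tle: "\<And>u. u \<in> U' \<Longrightarrow> t \<le> l u / \<mu> u" unfolding t_def using finU' by auto
    have tpos: "t > 0" using j U'(2) \<mu>pos by auto
    have tj: "t * \<mu> j = l j" using j \<mu>pos by auto
    define U'' where "U'' = insert z (U' - {j})"
    define m where "m u = (if u = z then t else l u - t * \<mu> u)" for u
    have finU'': "finite U''" unfolding U''_def using finU' by simp
    have U''T: "U'' \<subseteq> T" unfolding U''_def using zT U'T by blast
    have mnn: "\<forall>u\<in>U''. m u \<ge> 0"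
    proof
      fix u assume "u \<in> U''"
      show "m u \<ge> 0"
      proof (cases "u = z")
        case True then show ?thesis unfolding m_def using tpos by simp
      next
        case False
        then have u: "u \<in> U'" using \<open>u \<in> U''\<close> unfolding U''_def by auto
        have "t \<le> l u / \<mu> u" using tle u .
        then have "t * \<mu> u \<le> l u" using \<mu>pos u by (simp add: le_divide_eq)
        then show ?thesis unfolding m_def using False by simp
      qed
    qed
    have zn: "z \<notin> U' - {j}" using znot by blast
    have sm1: "(\<Sum>u\<in>U' - {j}. m u) = (\<Sum>u\<in>U'. l u - t * \<mu> u) - (l j - t * \<mu> j)"
    proof -
      have "(\<Sum>u\<in>U' - {j}. m u) = (\<Sum>u\<in>U' - {j}. l u - t * \<mu> u)"
        unfolding m_def by (rule sum.cong) (use znot in auto)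
      then show ?thesis using finU' j by (simp add: sum_diff1)
    qed
    have "(\<Sum>u\<in>U''. m u) = of_nat h"
    proof -
      have "(\<Sum>u\<in>U''. m u) = m z + (\<Sum>u\<in>U' - {j}. m u)"
        unfolding U''_def using finU' zn by simp
      also have "\<dots> = t + ((\<Sum>u\<in>U'. l u) - t * (\<Sum>u\<in>U'. \<mu> u))"
        unfolding sm1 using tj by (simp add: m_def sum_subtractf sum_distrib_left)
      finally show ?thesis using U'(4) s\<mu> by simp
    qed
    moreover have "(\<Sum>u\<in>U''. m u *s u) = x"
    proof -
      have a: "(\<Sum>u\<in>U' - {j}. m u *s u) = (\<Sum>u\<in>U'. (l u - t * \<mu> u) *s u) - (l j - t * \<mu> j) *s j"
      proof -
        have "(\<Sum>u\<in>U' - {j}. m u *s u) = (\<Sum>u\<in>U' - {j}. (l u - t * \<mu> u) *s u)"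
          unfolding m_def by (rule sum.cong) (use znot in auto)
        then show ?thesis using finU' j by (simp add: sum_diff1)
      qed
      have b: "(\<Sum>u\<in>U'. (l u - t * \<mu> u) *s u) = x - t *s z"
        unfolding xU' z_def vec.scale_sum_right vec.scale_scale sum_subtractf[symmetric]
        by (rule sum.cong) (auto simp: vec.scale_left_diff_distrib)
      have "(\<Sum>u\<in>U''. m u *s u) = m z *s z + (\<Sum>u\<in>U' - {j}. m u *s u)"
        unfolding U''_def using finU' zn by simp
      also have "\<dots> = x" unfolding a b using tj by (simp add: m_def)
      finally show ?thesis .
    qed
    ultimately have ccU'': "cc U'' (of_nat h) x" unfolding cc_def using mnn by (intro exI[of _ m]) simp
    have sub1: "{s\<in>T. cc U'' 1 s} \<subseteq> {s\<in>T. cc U' 1 s}"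
    proof -
      have "\<And>w. w \<in> U'' \<Longrightarrow> cc U' 1 w" unfolding U''_def using ccz cc_point[OF finU'] by auto
      then show ?thesis using cc_trans[OF finU''] by blast
    qed
    have jin: "j \<in> {s\<in>T. cc U' 1 s}" using j U'T cc_point[OF finU'] by blast
    have jout: "\<not> cc U'' 1 j"
    proof
      assume "cc U'' 1 j"
      then obtain \<beta> where \<beta>: "\<forall>v\<in>U''. \<beta> v \<ge> 0" "(\<Sum>v\<in>U''. \<beta> v) = 1" "j = (\<Sum>v\<in>U''. \<beta> v *s v)"
        unfolding cc_def by blast
      have bs: "\<beta> z + (\<Sum>v\<in>U' - {j}. \<beta> v) = 1" using \<beta>(2) finU' zn unfolding U''_def by simp
      have bv: "\<beta> z *s z + (\<Sum>v\<in>U' - {j}. \<beta> v *s v) = j" using \<beta>(3) finU' zn unfolding U''_def by simp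
      have "(\<Sum>v\<in>U' - {j}. \<beta> v) \<ge> 0" using \<beta>(1) unfolding U''_def by (intro sum_nonneg) auto
      then have bz: "\<beta> z \<le> 1" using bs by linarith
      define a where "a u = \<beta> z * \<mu> u + (if u = j then -1 else \<beta> u)" for u
      have "(\<Sum>u\<in>U'. a u) = \<beta> z * (\<Sum>u\<in>U'. \<mu> u) + (\<Sum>u\<in>U'. (if u = j then -1 else \<beta> u))"
        unfolding a_def by (simp add: sum.distrib sum_distrib_left)
      also have "(\<Sum>u\<in>U'. (if u = j then -1 else \<beta> u)) = -1 + (\<Sum>u\<in>U' - {j}. \<beta> u)"
        using finU' j by (simp add: sum.remove)
      finally have s1: "(\<Sum>u\<in>U'. a u) = 0" using s\<mu> bs by simp
      have "(\<Sum>u\<in>U'. a u *s u) = \<beta> z *s z + (\<Sum>u\<in>U'. (if u = j then -1 else \<beta> u) *s u)"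
        unfolding a_def z_def by (simp add: vec.scale_left_distrib sum.distrib vec.scale_sum_right vec.scale_scale)
      also have "(\<Sum>u\<in>U'. (if u = j then -1 else \<beta> u) *s u) = - j + (\<Sum>u\<in>U' - {j}. \<beta> u *s u)"
        using finU' j by (simp add: sum.remove)
      finally have s2: "(\<Sum>u\<in>U'. a u *s u) = 0" using bv by (simp add: algebra_simps)
      have "a j = 0" using ind[OF s1 s2] j by blast
      moreover have "\<beta> z * \<mu> j < 1"
      proof -
        have "\<beta> z * \<mu> j \<le> 1 * \<mu> j" by (rule mult_right_mono[OF bz]) (use \<mu>pos j in auto)
        moreover have "\<mu> j < 1" using \<mu>pos j by blast
        ultimately show ?thesis by linarith
      qed
      ultimately show False unfolding a_def by simp
    qed
    have sub2: "{s\<in>T. cc U' 1 s} \<subseteq> {s\<in>T. cc U 1 s}" using cc_mono[OF U'(1) finU] by blast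
    have "{s\<in>T. cc U'' 1 s} \<subset> {s\<in>T. cc U 1 s}" using sub1 sub2 jin jout by blast
    then have "card {s\<in>T. cc U'' 1 s} < card {s\<in>T. cc U 1 s}"
      by (rule psubset_card_mono[rotated]) (use finT in simp)
    from IH[OF this U''T ccU''] show ?thesis .
  qed
qed

lemma peel:
  fixes T :: "(rat^'n) set" and h :: nat
  assumes finT: "finite T" and HT: "\<forall>U z. U \<subseteq> T \<longrightarrow> cc U 1 z \<longrightarrow> lattice_pt z \<longrightarrow> z \<in> T"
    and latT: "\<forall>t\<in>T. lattice_pt t"
    and lat: "lattice_pt x" and hn: "CARD('n) \<le> h"
    and conic: "\<forall>r y. r \<ge> 0 \<longrightarrow> y \<in> C \<longrightarrow> r *s y \<in> C" and zC: "0 \<in> C"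
    and ccq: "cc T (of_nat h) q" and cC: "c \<in> C" and xe: "x = q + c"
  shows "\<exists>p\<in>T. \<exists>q' c'. cc T (of_nat h - 1) q' \<and> c' \<in> C \<and> x - p = q' + c'"
proof -
  obtain l0 where l0: "\<forall>v\<in>T. l0 v \<ge> 0" "(\<Sum>v\<in>T. l0 v) = of_nat h" "q = (\<Sum>v\<in>T. l0 v *s v)"
    using ccq unfolding cc_def by blast
  have "x = (\<Sum>v\<in>T. l0 v *s v) + 1 *s c" using l0 xe by simp
  from carath_step[OF finT l0(1) _ this]
  obtain U' l r where U': "U' \<subseteq> T" "\<forall>u\<in>U'. l u > 0" "r \<ge> 0" "(\<Sum>u\<in>U'. l u) = of_nat h"
    "x = (\<Sum>u\<in>U'. l u *s u) + r *s c" "indep U' r c" using l0(2) by auto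
  have finU': "finite U'" using U'(1) finT finite_subset by blast
  have cardU': "card U' + (if r = 0 then 0 else 1) \<le> CARD('n) + 1"
    using indep_card[OF finU' U'(6)] .
  show ?thesis
  proof (cases "\<exists>u\<in>U'. l u \<ge> 1")
    case True
    then obtain u where u: "u \<in> U'" "l u \<ge> 1" by blast
    have "cc U' (of_nat h - 1) ((\<Sum>v\<in>U'. l v *s v) - u)"
      using peel_one[OF finU' u _ U'(4)] U'(2) by (auto simp: less_imp_le)
    then have "cc T (of_nat h - 1) ((\<Sum>v\<in>U'. l v *s v) - u)" using cc_mono[OF U'(1) finT] by blast
    moreover have "r *s c \<in> C" using conic U'(3) cC by blast
    moreover have "x - u = ((\<Sum>v\<in>U'. l v *s v) - u) + r *s c" using U'(5) by simp
    ultimately show ?thesis using u U'(1) by blast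
  next
    case False
    then have lt1: "\<forall>u\<in>U'. l u < 1" by auto
    have n1: "CARD('n) \<ge> 1" by (simp add: Suc_leI)
    have U'ne: "U' \<noteq> {}"
    proof
      assume "U' = {}"
      then have "(of_nat h :: rat) = 0" using U'(4) by simp
      then show False using hn n1 by simp
    qed
    have "(of_nat h :: rat) < of_nat (card U')" using sum_lt_card[OF finU' U'ne lt1] U'(4) by simp
    then have "h < card U'" by simp
    then have r0: "r = 0" using cardU' hn by (auto split: if_splits)
    then have xU: "x = (\<Sum>u\<in>U'. l u *s u)" using U'(5) by simp
    have "cc U' (of_nat h) x" unfolding cc_def xU using U'(2,4) by (intro exI[of _ l]) (auto simp: less_imp_le)
    from stellar[OF finT HT latT lat hn U'(1) this] obtain p where "p \<in> T" "cc T (of_nat h - 1) (x - p)"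
      by blast
    then show ?thesis using zC by (intro bexI[of _ p] exI[of _ "x - p"] exI[of _ 0]) auto
  qed
qed

lemma iter:
  fixes T :: "(rat^'n) set"
  assumes finT: "finite T" and HT: "\<forall>U z. U \<subseteq> T \<longrightarrow> cc U 1 z \<longrightarrow> lattice_pt z \<longrightarrow> z \<in> T"
    and latT: "\<forall>t\<in>T. lattice_pt t"
    and conic: "\<forall>r y. r \<ge> 0 \<longrightarrow> y \<in> C \<longrightarrow> r *s y \<in> C" and zC: "0 \<in> C"
    and en: "e \<ge> CARD('n) - 1"
  shows "\<forall>x q c. lattice_pt x \<longrightarrow> cc T (of_nat (e + j)) q \<longrightarrow> c \<in> C \<longrightarrow> x = q + c \<longrightarrow>
    (\<exists>p q' c'. (\<forall>i<j. p i \<in> T) \<and> cc T (of_nat e) q' \<and> c' \<in> C \<and> x = q' + c' + (\<Sum>i<j. p i))"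
proof (induction j)
  case 0
  then show ?case by (intro allI impI) (rule exI[of _ "\<lambda>i. 0"], auto)
next
  case (Suc j)
  show ?case
  proof (intro allI impI)
    fix x q c
    assume lat: "lattice_pt x" and ccq: "cc T (of_nat (e + Suc j)) q" and cC: "c \<in> C" and xe: "x = q + c"
    have hn: "CARD('n) \<le> e + Suc j" using en by linarith
    from peel[OF finT HT latT lat hn conic zC ccq cC xe]
    obtain p0 q1 c1 where p0: "p0 \<in> T" "cc T (of_nat (e + Suc j) - 1) q1" "c1 \<in> C" "x - p0 = q1 + c1"
      by blast
    have cc1: "cc T (of_nat (e + j)) q1" using p0(2) by simp
    have lat1: "lattice_pt (x - p0)" using lat latT p0(1) lattice_diff by blast
    from Suc.IH[rule_format, OF lat1 cc1 p0(3) p0(4)] obtain p q' c' where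
      h: "\<forall>i<j. p i \<in> T" "cc T (of_nat e) q'" "c' \<in> C" "x - p0 = q' + c' + (\<Sum>i<j. p i)" by blast
    define p' where "p' = p(j := p0)"
    have "(\<Sum>i<Suc j. p' i) = (\<Sum>i<j. p i) + p0"
      unfolding p'_def by (simp add: sum.lessThan_Suc)
    then have "x = q' + c' + (\<Sum>i<Suc j. p' i)" using h(4) by (simp add: algebra_simps)
    moreover have "\<forall>i<Suc j. p' i \<in> T" using h(1) p0(1) unfolding p'_def by (auto simp: less_Suc_eq)
    ultimately show "\<exists>p q' c'. (\<forall>i<Suc j. p i \<in> T) \<and> cc T (of_nat e) q' \<and> c' \<in> C \<and> x = q' + c' + (\<Sum>i<Suc j. p i)"
      using h(2,3) by blast
  qed
qed

lemma pairing_add: "pairing (y + z) v = pairing y v + pairing z v"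
  unfolding pairing_def by (simp add: distrib_right sum.distrib)

lemma pairing_scale: "pairing (r *s y) v = r * pairing y v"
  unfolding pairing_def by (simp add: sum_distrib_left mult.assoc)

lemma dual_zero: "0 \<in> dual_cone \<sigma>"
  unfolding dual_cone_def pairing_def by simp

lemma dual_add: "y \<in> dual_cone \<sigma> \<Longrightarrow> z \<in> dual_cone \<sigma> \<Longrightarrow> y + z \<in> dual_cone \<sigma>"
  unfolding dual_cone_def by (auto simp: pairing_add)

lemma dual_scale: "r \<ge> 0 \<Longrightarrow> y \<in> dual_cone \<sigma> \<Longrightarrow> r *s y \<in> dual_cone \<sigma>"
  unfolding dual_cone_def by (auto simp: pairing_scale)

lemma dual_sum: "finite I \<Longrightarrow> (\<And>i. i \<in> I \<Longrightarrow> f i \<in> dual_cone \<sigma>) \<Longrightarrow> (\<Sum>i\<in>I. f i) \<in> dual_cone \<sigma>"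
  by (induction I rule: finite_induct) (auto intro: dual_add dual_zero)

lemma dilate_dilate: "dilate k (dilate e P) = dilate (k * e) P"
  unfolding dilate_def image_image by (simp add: vec.scale_scale mult.commute)

lemma char:
  fixes V :: "(rat^'n) set" and m :: nat
  assumes "m \<ge> 1"
  shows "x \<in> dilate m (minkowski_sum (rat_conv V) (dual_cone \<sigma>)) \<longleftrightarrow>
    (\<exists>q c. cc V (of_nat m) q \<and> c \<in> dual_cone \<sigma> \<and> x = q + c)"
proof
  assume "x \<in> dilate m (minkowski_sum (rat_conv V) (dual_cone \<sigma>))"
  then obtain a b where ab: "cc V 1 a" "b \<in> dual_cone \<sigma>" "x = of_nat m *s (a + b)"
    unfolding dilate_def minkowski_sum_def rat_conv_cc by auto
  have "cc V (of_nat m * 1) (of_nat m *s a)" by (rule cc_scale[OF ab(1)]) simp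
  moreover have "of_nat m *s b \<in> dual_cone \<sigma>" by (rule dual_scale) (use ab in auto)
  moreover have "x = of_nat m *s a + of_nat m *s b" using ab(3) by (simp add: vec.scale_right_distrib)
  ultimately show "\<exists>q c. cc V (of_nat m) q \<and> c \<in> dual_cone \<sigma> \<and> x = q + c" by auto
next
  assume "\<exists>q c. cc V (of_nat m) q \<and> c \<in> dual_cone \<sigma> \<and> x = q + c"
  then obtain q c where qc: "cc V (of_nat m) q" "c \<in> dual_cone \<sigma>" "x = q + c" by blast
  have m0: "(of_nat m :: rat) \<noteq> 0" using assms by simp
  have "cc V (1 / of_nat m * of_nat m) ((1 / of_nat m) *s q)" by (rule cc_scale[OF qc(1)]) simp
  then have a: "(1 / of_nat m) *s q \<in> rat_conv V" unfolding rat_conv_cc using m0 by simp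
  have b: "(1 / of_nat m) *s c \<in> dual_cone \<sigma>" by (rule dual_scale) (use qc in auto)
  have "x = of_nat m *s ((1 / of_nat m) *s q + (1 / of_nat m) *s c)"
    using qc(3) m0 by (simp add: vec.scale_right_distrib vec.scale_scale)
  then show "x \<in> dilate m (minkowski_sum (rat_conv V) (dual_cone \<sigma>))"
    unfolding dilate_def minkowski_sum_def using a b by blast
qed

lemma finite_lattice_conv:
  fixes V :: "(rat^'n) set"
  assumes finV: "finite V"
  shows "finite {t. lattice_pt t \<and> cc V 1 t}"
proof -
  define B where "B i = (\<Sum>v\<in>V. \<bar>v $ i\<bar>)" for i
  define N where "N i = \<lceil>B i\<rceil>" for i
  have "{t. lattice_pt t \<and> cc V 1 t} \<subseteq> (\<lambda>f. \<chi> i. of_int (f i)) ` (PiE UNIV (\<lambda>i. {- N i..N i}))"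
  proof
    fix t assume "t \<in> {t. lattice_pt t \<and> cc V 1 t}"
    then have lt: "lattice_pt t" and ct: "cc V 1 t" by auto
    obtain c where c: "\<forall>v\<in>V. c v \<ge> 0" "(\<Sum>v\<in>V. c v) = 1" "t = (\<Sum>v\<in>V. c v *s v)"
      using ct unfolding cc_def by blast
    have cle: "\<forall>v\<in>V. c v \<le> 1"
    proof
      fix v assume v: "v \<in> V"
      have "c v \<le> (\<Sum>v\<in>V. c v)" using member_le_sum[OF v, of c] c(1) finV by auto
      then show "c v \<le> 1" using c(2) by simp
    qed
    have bnd: "\<bar>t $ i\<bar> \<le> B i" for i
    proof -
      have "t $ i = (\<Sum>v\<in>V. c v * v $ i)" using c(3) by (simp add: sum_component)
      then have "\<bar>t $ i\<bar> \<le> (\<Sum>v\<in>V. \<bar>c v * v $ i\<bar>)" by (simp add: sum_abs)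
      also have "\<dots> \<le> (\<Sum>v\<in>V. \<bar>v $ i\<bar>)"
      proof (rule sum_mono)
        fix v assume v: "v \<in> V"
        have "\<bar>c v * v $ i\<bar> = c v * \<bar>v $ i\<bar>" using c(1) v by (simp add: abs_mult)
        also have "\<dots> \<le> 1 * \<bar>v $ i\<bar>" by (rule mult_right_mono) (use cle v in auto)
        finally show "\<bar>c v * v $ i\<bar> \<le> \<bar>v $ i\<bar>" by simp
      qed
      finally show ?thesis unfolding B_def .
    qed
    define f where "f i = \<lfloor>t $ i\<rfloor>" for i
    have fi: "of_int (f i) = t $ i" for i unfolding f_def using lt unfolding lattice_pt_def
      by (simp add: of_int_floor)
    have "f i \<in> {- N i..N i}" for i
    proof -
      have "\<bar>of_int (f i)\<bar> \<le> B i" using fi bnd by simp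
      then have "\<bar>of_int (f i)\<bar> \<le> (of_int (N i) :: rat)" unfolding N_def
        using le_of_int_ceiling order_trans by blast
      then have "\<bar>f i\<bar> \<le> N i" by (metis of_int_abs of_int_le_iff)
      then show ?thesis by auto
    qed
    then have "f \<in> PiE UNIV (\<lambda>i. {- N i..N i})" by auto
    moreover have "t = (\<chi> i. of_int (f i))" using fi by (simp add: vec_eq_iff)
    ultimately show "t \<in> (\<lambda>f. \<chi> i. of_int (f i)) ` (PiE UNIV (\<lambda>i. {- N i..N i}))" by blast
  qed
  moreover have "finite (PiE (UNIV :: 'n set) (\<lambda>i. {- N i..N i}))" by (rule finite_PiE) auto
  ultimately show ?thesis using finite_subset by blast
qed

theorem theorem3p6:
  fixes \<sigma> :: "(rat ^ 'n) set" and V :: "(rat ^ 'n) set" and e :: nat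
  assumes "rational_polyhedral_cone \<sigma>"
    and "pointed_cone \<sigma>"
    and "finite V" and "V \<noteq> {}" and "\<forall>v\<in>V. lattice_pt v"
    and "e \<ge> 1" and "e \<ge> CARD('n) - 1"
  shows "normal_polyhedron (dilate e (minkowski_sum (rat_conv V) (dual_cone \<sigma>)))"
proof -
  note finV = assms(3) and latV = assms(5) and e1 = assms(6) and en = assms(7)
  define P0 where "P0 = minkowski_sum (rat_conv V) (dual_cone \<sigma>)"
  define T where "T = {t. lattice_pt t \<and> cc V 1 t}"
  have finT: "finite T" unfolding T_def by (rule finite_lattice_conv[OF finV])
  have latT: "\<forall>t\<in>T. lattice_pt t" unfolding T_def by blast
  have TV: "\<And>w. w \<in> T \<Longrightarrow> cc V 1 w" unfolding T_def by blast
  have toV: "\<And>h q. cc T h q \<Longrightarrow> cc V h q" using cc_trans[OF finT TV] by blast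
  have HT: "\<forall>U z. U \<subseteq> T \<longrightarrow> cc U 1 z \<longrightarrow> lattice_pt z \<longrightarrow> z \<in> T"
  proof (intro allI impI)
    fix U z assume U: "U \<subseteq> T" "cc U 1 z" "lattice_pt z"
    have "finite U" using U(1) finT finite_subset by blast
    then have "cc V 1 z" using cc_trans[of U V 1 z] U TV by blast
    then show "z \<in> T" using U(3) unfolding T_def by blast
  qed
  have VT: "V \<subseteq> T" unfolding T_def using latV cc_point[OF finV] by blast
  have conic: "\<forall>r y. r \<ge> 0 \<longrightarrow> y \<in> dual_cone \<sigma> \<longrightarrow> r *s y \<in> dual_cone \<sigma>" using dual_scale by blast
  have zC: "0 \<in> dual_cone \<sigma>" by (rule dual_zero)
  show ?thesis
    unfolding normal_polyhedron_def P0_def[symmetric]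
  proof (intro allI impI)
    fix k :: nat assume k1: "k \<ge> 1"
    have ke1: "k * e \<ge> 1" using k1 e1 by simp
    show "{x \<in> dilate k (dilate e P0). lattice_pt x} =
        {x. \<exists>m. (\<forall>i<k. m i \<in> dilate e P0 \<and> lattice_pt (m i)) \<and> x = (\<Sum>i<k. m i)}"
      unfolding dilate_dilate
    proof (intro equalityI subsetI)
      fix x assume "x \<in> {x \<in> dilate (k * e) P0. lattice_pt x}"
      then have xd: "x \<in> dilate (k * e) P0" and lat: "lattice_pt x" by auto
      obtain q c where qc: "cc V (of_nat (k * e)) q" "c \<in> dual_cone \<sigma>" "x = q + c"
        using xd char[OF ke1] unfolding P0_def by blast
      have kk: "k * e = e + (k - 1) * e" using k1 by (cases k) auto
      have "cc T (of_nat (e + (k - 1) * e)) q" using cc_mono[OF VT finT qc(1)] kk by simp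
      from iter[OF finT HT latT conic zC en, rule_format, OF lat this qc(2) qc(3)]
      obtain p q' c' where pq: "\<forall>i<(k - 1) * e. p i \<in> T" "cc T (of_nat e) q'" "c' \<in> dual_cone \<sigma>"
        "x = q' + c' + (\<Sum>i<(k - 1) * e. p i)" by blast
      define m where "m i = (if i = 0 then q' + c' else (\<Sum>l\<in>{(i - 1) * e..<(i - 1) * e + e}. p l))" for i
      have "(\<Sum>i<k. m i) = (\<Sum>i<Suc (k - 1). m i)" using k1 by simp
      also have "\<dots> = m 0 + (\<Sum>i<k - 1. m (Suc i))" by (rule sum.lessThan_Suc_shift)
      also have "(\<Sum>i<k - 1. m (Suc i)) = (\<Sum>i<k - 1. (\<Sum>l\<in>{i * e..<i * e + e}. p l))"
        unfolding m_def by simp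
      also have "\<dots> = (\<Sum>i<(k - 1) * e. p i)" by (rule sum.nat_group)
      finally have xs: "x = (\<Sum>i<k. m i)" using pq(4) unfolding m_def by simp
      have "\<forall>i<k. m i \<in> dilate e P0 \<and> lattice_pt (m i)"
      proof (intro allI impI)
        fix i assume ik: "i < k"
        show "m i \<in> dilate e P0 \<and> lattice_pt (m i)"
        proof (cases "i = 0")
          case True
          have "m i \<in> dilate e P0" unfolding P0_def char[OF e1] True m_def
            using toV[OF pq(2)] pq(3) by auto
          moreover have "lattice_pt (q' + c')"
          proof -
            have "lattice_pt (\<Sum>i<(k - 1) * e. p i)" by (rule lattice_sum) (use pq(1) latT in auto)
            then have "lattice_pt (x - (\<Sum>i<(k - 1) * e. p i))" using lat lattice_diff by blast
            then show ?thesis using pq(4) by simp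
          qed
          ultimately show ?thesis unfolding m_def using True by simp
        next
          case False
          define I where "I = {(i - 1) * e..<(i - 1) * e + e}"
          have mi: "m i = (\<Sum>l\<in>I. p l)" unfolding m_def I_def using False by simp
          have IT: "\<forall>l\<in>I. p l \<in> T"
          proof
            fix l assume "l \<in> I"
            then have "l < (i - 1) * e + e" unfolding I_def by simp
            also have "(i - 1) * e + e = i * e" using False by (cases i) auto
            also have "i * e \<le> (k - 1) * e" using ik False by (intro mult_right_mono) auto
            finally show "p l \<in> T" using pq(1) by blast
          qed
          have "cc T (\<Sum>l\<in>I. 1) (\<Sum>l\<in>I. p l)"
            by (rule cc_sum) (use IT cc_point[OF finT] I_def in auto)
          then have "cc T (of_nat e) (m i)" unfolding mi I_def by simp
          then have "cc V (of_nat e) (m i)" by (rule toV)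
          then have "m i \<in> dilate e P0" unfolding P0_def char[OF e1] using zC by auto
          moreover have "lattice_pt (m i)" unfolding mi
            by (rule lattice_sum) (use IT latT I_def in auto)
          ultimately show ?thesis by simp
        qed
      qed
      then show "x \<in> {x. \<exists>m. (\<forall>i<k. m i \<in> dilate e P0 \<and> lattice_pt (m i)) \<and> x = (\<Sum>i<k. m i)}"
        using xs by blast
    next
      fix x assume "x \<in> {x. \<exists>m. (\<forall>i<k. m i \<in> dilate e P0 \<and> lattice_pt (m i)) \<and> x = (\<Sum>i<k. m i)}"
      then obtain m where m: "\<forall>i<k. m i \<in> dilate e P0 \<and> lattice_pt (m i)" "x = (\<Sum>i<k. m i)" by blast
      have "\<forall>i\<in>{..<k}. \<exists>qc. cc V (of_nat e) (fst qc) \<and> snd qc \<in> dual_cone \<sigma> \<and> m i = fst qc + snd qc"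
        using m(1) unfolding P0_def char[OF e1] by auto
      then obtain f where f: "\<forall>i\<in>{..<k}. cc V (of_nat e) (fst (f i)) \<and> snd (f i) \<in> dual_cone \<sigma> \<and> m i = fst (f i) + snd (f i)"
        by (metis bchoice)
      have "cc V (\<Sum>i<k. of_nat e) (\<Sum>i<k. fst (f i))" by (rule cc_sum) (use f in auto)
      then have cq: "cc V (of_nat (k * e)) (\<Sum>i<k. fst (f i))" by simp
      have cC: "(\<Sum>i<k. snd (f i)) \<in> dual_cone \<sigma>" by (rule dual_sum) (use f in auto)
      have "x = (\<Sum>i<k. fst (f i)) + (\<Sum>i<k. snd (f i))" using m(2) f by (simp add: sum.distrib[symmetric])
      then have "x \<in> dilate (k * e) P0" unfolding P0_def char[OF ke1] using cq cC by blast
      moreover have "lattice_pt x" unfolding m(2) by (rule lattice_sum) (use m(1) in auto)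
      ultimately show "x \<in> {x \<in> dilate (k * e) P0. lattice_pt x}" by simp
    qed
  qed
qed

end
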